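(* Let $f(x)=\frac1n\sum_{i=1}^nf_i(x)$ on $\mathbb{R}^d$, where each $f_i$ is convex, $L_i$-smooth and non-negative, and let $x^*$ be a minimizer of $f$. Consider SGD with the SPS$^\ell_{\max}$ stepsize (defined in the context) using $\ell^*_{\mathcal S}=0$ for all $\mathcal S\subseteq[n]$, and let $\alpha:=\min\{\frac1{2cL_{\max}},\gamma_b\}$ with $L_{\max}=\max_iL_i$. (i) If $c=1$, then for every $K\ge1$, $\mathbb{E}[f(\bar x^K)-f(x^* )]\le\frac{\|x^0-x^*\|^2}{\alpha K}+\frac{2\gamma_bf(x^* )}{\alpha}$, where $\bar x^K=\frac1K\sum_{k=0}^{K-1}x^k$. (ii) If in addition $f$ is $\mu$-strongly convex and $c\ge1/2$, then for every $k\ge0$, $\mathbb{E}\|x^k-x^*\|^2\le(1-\mu\alpha)^k\|x^0-x^*\|^2+\frac{2\gamma_bf(x^* )}{\mu\alpha}$.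
   Context: Minibatches: fix a batch size $B$; at each iteration a subset $\mathcal S_k\subseteq[n]$, $|\mathcal S_k|=B$, is sampled uniformly at random, independently across iterations. For $\mathcal S\subseteq[n]$, $f_{\mathcal S}:=\frac1{|\mathcal S|}\sum_{i\in\mathcal S}f_i$. SGD: $x^{k+1}=x^k-\gamma_k\nabla f_{\mathcal S_k}(x^k)$ from given $x^0$. SPS$^\ell_{\max}$ stepsize with $\ell^*=0$: $\gamma_k=\min\left\{\frac{f_{\mathcal S_k}(x^k)}{c\|\nabla f_{\mathcal S_k}(x^k)\|^2},\ \gamma_b\right\}$ with constants $c,\gamma_b>0$; if $\nabla f_{\mathcal S_k}(x^k)=0$ the iterate is not updated. *)

theory Defs
  imports "HOL-Analysis.Analysis"
begin

definition L_smooth :: "real \<Rightarrow> ('a::euclidean_space \<Rightarrow> real) \<Rightarrow> ('a \<Rightarrow> 'a) \<Rightarrow> bool" where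
  "L_smooth L f g \<longleftrightarrow>
     (\<forall>x. (f has_derivative (\<lambda>h. g x \<bullet> h)) (at x)) \<and>
     (\<forall>x y. norm (g x - g y) \<le> L * norm (x - y))"

definition strongly_convex :: "real \<Rightarrow> ('a::real_normed_vector \<Rightarrow> real) \<Rightarrow> bool" where
  "strongly_convex \<mu> f \<longleftrightarrow>
     (\<forall>x y. \<forall>t\<in>{0..1}. f ((1 - t) *\<^sub>R x + t *\<^sub>R y)
        \<le> (1 - t) * f x + t * f y - \<mu> / 2 * t * (1 - t) * (norm (x - y))\<^sup>2)"

definition favg :: "nat \<Rightarrow> (nat \<Rightarrow> 'a \<Rightarrow> real) \<Rightarrow> 'a \<Rightarrow> real" where
  "favg n fs x = (\<Sum>i<n. fs i x) / real n"

definition fS :: "(nat \<Rightarrow> 'a \<Rightarrow> real) \<Rightarrow> nat set \<Rightarrow> 'a \<Rightarrow> real" where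
  "fS fs S x = (\<Sum>i\<in>S. fs i x) / real (card S)"

definition gS :: "(nat \<Rightarrow> 'a \<Rightarrow> 'a::real_vector) \<Rightarrow> nat set \<Rightarrow> 'a \<Rightarrow> 'a" where
  "gS gs S x = (1 / real (card S)) *\<^sub>R (\<Sum>i\<in>S. gs i x)"

text \<open>The set of admissible minibatches: subsets of [n] = {0..<n} of size B.\<close>
definition batches :: "nat \<Rightarrow> nat \<Rightarrow> nat set set" where
  "batches n B = {S. S \<subseteq> {..<n} \<and> card S = B}"

definition sps_step :: "(nat \<Rightarrow> 'a \<Rightarrow> real) \<Rightarrow> (nat \<Rightarrow> 'a \<Rightarrow> 'a::real_inner)
    \<Rightarrow> real \<Rightarrow> real \<Rightarrow> 'a \<Rightarrow> nat set \<Rightarrow> 'a" where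
  "sps_step fs gs c \<gamma>b x S =
     (let g = gS gs S x in
      if g = 0 then x
      else x - min (fS fs S x / (c * (norm g)\<^sup>2)) \<gamma>b *\<^sub>R g)"

text \<open>The iterate x^k as a function of the sampled minibatches [S_0,...,S_{k-1}].\<close>
definition sps_iter :: "(nat \<Rightarrow> 'a \<Rightarrow> real) \<Rightarrow> (nat \<Rightarrow> 'a \<Rightarrow> 'a::real_inner)
    \<Rightarrow> real \<Rightarrow> real \<Rightarrow> 'a \<Rightarrow> nat set list \<Rightarrow> 'a" where
  "sps_iter fs gs c \<gamma>b x0 Ss = foldl (sps_step fs gs c \<gamma>b) x0 Ss"

text \<open>Sample space for k i.i.d. uniform minibatch draws, and the expectation
  of a function of the draws (uniform distribution on this finite set).\<close>
definition samples :: "nat \<Rightarrow> nat \<Rightarrow> nat \<Rightarrow> nat set list set" where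
  "samples n B k = {Ss. length Ss = k \<and> set Ss \<subseteq> batches n B}"

definition Exp :: "nat \<Rightarrow> nat \<Rightarrow> nat \<Rightarrow> (nat set list \<Rightarrow> real) \<Rightarrow> real" where
  "Exp n B k X = (\<Sum>Ss\<in>samples n B k. X Ss) / real (card (samples n B k))"

end

theory Submission
  imports Defs
begin

lemma first_order:
  fixes f :: "'a::real_inner \<Rightarrow> real"
  assumes d: "(f has_derivative (\<lambda>h. G \<bullet> h)) (at x)"
  and ineq: "\<And>t. 0 < t \<Longrightarrow> t < 1 \<Longrightarrow> f (x + t *\<^sub>R (y - x)) \<le> (1-t) * f x + t * f y - t*(1-t)*c"
  shows "G \<bullet> (y - x) \<le> f y - f x - c"
proof -
  define \<phi> where "\<phi> = (\<lambda>t::real. f (x + t *\<^sub>R (y - x)))"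
  have l: "((\<lambda>t::real. x + t *\<^sub>R (y - x)) has_derivative (\<lambda>t. t *\<^sub>R (y - x))) (at 0)"
    by (auto intro!: derivative_eq_intros)
  have d0: "(f has_derivative (\<lambda>h. G \<bullet> h)) (at (x + 0 *\<^sub>R (y - x)))" using d by simp
  have "(\<phi> has_derivative (\<lambda>t. G \<bullet> (t *\<^sub>R (y - x)))) (at 0)"
    unfolding \<phi>_def using has_derivative_compose[OF l d0] by (simp add: o_def)
  moreover have "(\<lambda>t. G \<bullet> (t *\<^sub>R (y - x))) = (*) (G \<bullet> (y - x))" by (auto simp: fun_eq_iff)
  ultimately have "(\<phi> has_derivative (*) (G \<bullet> (y - x))) (at 0)"
    by simp
  hence "(\<phi> has_field_derivative (G \<bullet> (y - x))) (at 0 within {0<..})"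
    using has_field_derivative_def has_field_derivative_at_within by blast
  hence q: "((\<lambda>t. (\<phi> t - \<phi> 0) / (t - 0)) \<longlongrightarrow> G \<bullet> (y - x)) (at_right 0)"
    using has_field_derivative_iff by blast
  have r: "((\<lambda>t::real. f y - f x - (1 - t) * c) \<longlongrightarrow> f y - f x - (1 - 0) * c) (at_right 0)"
    by (intro tendsto_intros)
  have ev: "eventually (\<lambda>t. (\<phi> t - \<phi> 0) / (t - 0) \<le> f y - f x - (1 - t) * c) (at_right 0)"
  proof -
    have "eventually (\<lambda>t::real. t < 1) (at_right 0)"
      by (rule eventually_at_rightI[of 0 1]) auto
    moreover have "eventually (\<lambda>t::real. t > 0) (at_right 0)"
      by (simp add: eventually_at_right_less)
    ultimately show ?thesis
    proof eventually_elim
      case (elim t)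
      have "\<phi> t - \<phi> 0 \<le> t * (f y - f x - (1 - t) * c)"
        using ineq[OF elim(2) elim(1)] unfolding \<phi>_def by (simp add: algebra_simps)
      thus ?case using elim by (simp add: divide_simps mult.commute)
    qed
  qed
  have "G \<bullet> (y - x) \<le> f y - f x - (1 - 0) * c"
    by (rule tendsto_le[OF _ r q ev]) simp
  thus ?thesis by simp
qed

lemma descent:
  fixes f :: "'a::euclidean_space \<Rightarrow> real"
  assumes "L_smooth L f g"
  shows "f y \<le> f x + g x \<bullet> (y - x) + L/2 * (norm (y-x))^2"
proof -
  define v where "v = y - x"
  have fd: "\<And>z. (f has_derivative (\<lambda>h. g z \<bullet> h)) (at z)"
   and lip: "\<And>a b. norm (g a - g b) \<le> L * norm (a - b)"
    using assms unfolding L_smooth_def by auto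
  define \<psi> where "\<psi> = (\<lambda>t::real. f (x + t *\<^sub>R v) - t * (g x \<bullet> v) - L/2 * t^2 * (norm v)^2)"
  have D: "DERIV \<psi> t :> (g (x + t *\<^sub>R v) \<bullet> v - g x \<bullet> v - L * t * (norm v)^2)" for t
  proof -
    have l: "((\<lambda>t::real. x + t *\<^sub>R v) has_derivative (\<lambda>t. t *\<^sub>R v)) (at t)"
      by (auto intro!: derivative_eq_intros)
    have "((\<lambda>t. f (x + t *\<^sub>R v)) has_derivative (\<lambda>s. g (x + t *\<^sub>R v) \<bullet> (s *\<^sub>R v))) (at t)"
      using has_derivative_compose[OF l fd] by (simp add: o_def)
    moreover have "(\<lambda>s. g (x + t *\<^sub>R v) \<bullet> (s *\<^sub>R v)) = (*) (g (x + t *\<^sub>R v) \<bullet> v)" by (auto simp: fun_eq_iff)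
    ultimately have a: "((\<lambda>t. f (x + t *\<^sub>R v)) has_field_derivative (g (x + t *\<^sub>R v) \<bullet> v)) (at t)"
      by (simp add: has_field_derivative_def)
    show ?thesis unfolding \<psi>_def
      by (rule derivative_eq_intros a | simp)+ 
  qed
  have "\<psi> 1 \<le> \<psi> 0"
  proof (rule DERIV_nonpos_imp_nonincreasing[of 0 1])
    fix t :: real assume t: "0 \<le> t" "t \<le> 1"
    have "(g (x + t *\<^sub>R v) - g x) \<bullet> v \<le> norm (g (x + t *\<^sub>R v) - g x) * norm v"
      by (rule norm_cauchy_schwarz)
    also have "\<dots> \<le> L * norm (t *\<^sub>R v) * norm v"
      using lip[of "x + t *\<^sub>R v" x] by (intro mult_right_mono) auto
    also have "\<dots> = L * t * (norm v)^2" using t by (simp add: power2_eq_square)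
    finally show "\<exists>y. DERIV \<psi> t :> y \<and> y \<le> 0" using D[of t]
      by (intro exI[of _ "g (x + t *\<^sub>R v) \<bullet> v - g x \<bullet> v - L * t * (norm v)^2"]) (simp add: inner_diff_left)
  qed simp
  thus ?thesis unfolding \<psi>_def v_def by simp
qed

definition Avg :: "nat \<Rightarrow> nat \<Rightarrow> (nat set \<Rightarrow> real) \<Rightarrow> real" where
  "Avg n B h = (\<Sum>S\<in>batches n B. h S) / real (card (batches n B))"

lemma batches_finite: "finite (batches n B)"
  by (rule finite_subset[of _ "Pow {..<n}"]) (auto simp: batches_def)

lemma card_batches: "card (batches n B) = n choose B"
  using n_subsets[of "{..<n}" B] by (simp add: batches_def)

lemma card_batches_pos: "B \<le> n \<Longrightarrow> card (batches n B) > 0"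
  by (simp add: card_batches)

lemma card_batches_mem:
  assumes "i < n" "1 \<le> B"
  shows "card {S\<in>batches n B. i \<in> S} = (n - 1) choose (B - 1)"
proof -
  let ?T = "{T. T \<subseteq> {..<n} - {i} \<and> card T = B - 1}"
  have eq: "{S\<in>batches n B. i \<in> S} = insert i ` ?T"
  proof (intro equalityI subsetI)
    fix S assume S: "S \<in> {S\<in>batches n B. i \<in> S}"
    hence fin: "finite S" by (auto simp: batches_def intro: finite_subset)
    have "S - {i} \<in> ?T" using S fin by (auto simp: batches_def)
    moreover have "S = insert i (S - {i})" using S by auto
    ultimately show "S \<in> insert i ` ?T" by blast
  next
    fix S assume "S \<in> insert i ` ?T"
    then obtain T where T: "T \<in> ?T" "S = insert i T" by blast
    have fin: "finite T" using T by (auto intro: finite_subset)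
    have "card S = B" using T fin assms by (auto simp: card_insert_if)
    thus "S \<in> {S\<in>batches n B. i \<in> S}" using T assms by (auto simp: batches_def)
  qed
  have inj: "inj_on (insert i) ?T"
    by (rule inj_onI) (metis Diff_iff insert_absorb insert_ident mem_Collect_eq singletonI subset_iff)
  have "card {S\<in>batches n B. i \<in> S} = card ?T" unfolding eq by (rule card_image[OF inj])
  also have "\<dots> = card ({..<n} - {i}) choose (B - 1)" by (rule n_subsets) simp
  also have "card ({..<n} - {i}) = n - 1" using assms by simp
  finally show ?thesis .
qed

lemma avg_sum:
  fixes h :: "nat \<Rightarrow> real"
  assumes B: "1 \<le> B" "B \<le> n"
  shows "Avg n B (\<lambda>S. (\<Sum>i\<in>S. h i) / real (card S)) = (\<Sum>i<n. h i) / real n"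
proof -
  have cardS: "S \<in> batches n B \<Longrightarrow> card S = B" for S by (simp add: batches_def)
  have "(\<Sum>S\<in>batches n B. (\<Sum>i\<in>S. h i) / real (card S)) = (\<Sum>S\<in>batches n B. (\<Sum>i\<in>S. h i)) / real B"
    by (simp add: sum_divide_distrib cardS)
  also have "(\<Sum>S\<in>batches n B. (\<Sum>i\<in>S. h i)) = (\<Sum>S\<in>batches n B. (\<Sum>i<n. if i \<in> S then h i else 0))"
  proof (rule sum.cong[OF refl])
    fix S assume "S \<in> batches n B"
    hence "S \<subseteq> {..<n}" by (simp add: batches_def)
    thus "(\<Sum>i\<in>S. h i) = (\<Sum>i<n. if i \<in> S then h i else 0)"
      by (simp add: sum.If_cases Int_absorb1)
  qed
  also have "\<dots> = (\<Sum>i<n. \<Sum>S\<in>batches n B. if i \<in> S then h i else 0)" by (rule sum.swap)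
  also have "\<dots> = (\<Sum>i<n. h i * real ((n - 1) choose (B - 1)))"
  proof (rule sum.cong[OF refl])
    fix i assume "i \<in> {..<n}"
    hence "card {S\<in>batches n B. i \<in> S} = (n - 1) choose (B - 1)" using card_batches_mem B by simp
    thus "(\<Sum>S\<in>batches n B. if i \<in> S then h i else 0) = h i * real ((n - 1) choose (B - 1))"
      using batches_finite by (simp add: sum.If_cases[OF batches_finite] Int_def mult.commute)
  qed
  also have "\<dots> = (\<Sum>i<n. h i) * real ((n - 1) choose (B - 1))" by (simp add: sum_distrib_right)
  finally have 1: "(\<Sum>S\<in>batches n B. (\<Sum>i\<in>S. h i) / real (card S)) = (\<Sum>i<n. h i) * real ((n - 1) choose (B - 1)) / real B" .
  have abs: "real B * real (n choose B) = real n * real ((n - 1) choose (B - 1))"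
    using binomial_absorption[of "B - 1" n] B by (metis Suc_diff_le diff_Suc_1 of_nat_mult Suc_le_eq le_add_diff_inverse2 plus_1_eq_Suc)
  have pos: "real (n choose B) > 0" "real B > 0" "real n > 0" using B by auto
  show ?thesis unfolding Avg_def 1 card_batches using abs pos
    by (simp add: field_simps)
qed

lemma samples_eq: "samples n B k = {xs. set xs \<subseteq> batches n B \<and> length xs = k}"
  by (auto simp: samples_def)

lemma samples_finite: "finite (samples n B k)"
  unfolding samples_eq by (rule finite_lists_length_eq[OF batches_finite])

lemma card_samples: "card (samples n B k) = card (batches n B) ^ k"
  unfolding samples_eq by (rule card_lists_length_eq[OF batches_finite])

lemma card_samples_pos: "B \<le> n \<Longrightarrow> real (card (samples n B k)) > 0"
  by (simp add: card_samples card_batches_pos)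

lemma samples_Suc: "samples n B (Suc k) = (\<lambda>(Ss, S). Ss @ [S]) ` (samples n B k \<times> batches n B)"
proof (intro equalityI subsetI)
  fix xs assume xs: "xs \<in> samples n B (Suc k)"
  hence "xs \<noteq> []" by (auto simp: samples_def)
  then obtain ys y where "xs = ys @ [y]" by (metis rev_exhaust)
  with xs show "xs \<in> (\<lambda>(Ss, S). Ss @ [S]) ` (samples n B k \<times> batches n B)"
    by (auto simp: samples_def image_iff)
qed (auto simp: samples_def)

lemma Exp_Suc:
  "Exp n B (Suc k) X = Exp n B k (\<lambda>Ss. Avg n B (\<lambda>S. X (Ss @ [S])))"
proof -
  have inj: "inj_on (\<lambda>(Ss, S). Ss @ [S]) (samples n B k \<times> batches n B)"
    by (rule inj_onI) auto
  have "(\<Sum>Ss\<in>samples n B (Suc k). X Ss) = (\<Sum>p\<in>samples n B k \<times> batches n B. X (fst p @ [snd p]))"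
    unfolding samples_Suc by (subst sum.reindex[OF inj]) (simp add: case_prod_beta)
  also have "\<dots> = (\<Sum>Ss\<in>samples n B k. \<Sum>S\<in>batches n B. X (Ss @ [S]))"
    by (simp add: sum.cartesian_product split_def)
  finally have s: "(\<Sum>Ss\<in>samples n B (Suc k). X Ss) = (\<Sum>Ss\<in>samples n B k. \<Sum>S\<in>batches n B. X (Ss @ [S]))" .
  show ?thesis unfolding Exp_def Avg_def s card_samples
    by (simp add: sum_divide_distrib[symmetric] divide_divide_eq_left mult.commute)
qed

lemma Exp_0: "Exp n B 0 X = X []"
proof -
  have "samples n B 0 = {[]}" by (auto simp: samples_def)
  thus ?thesis by (simp add: Exp_def)
qed

lemma Exp_const: "B \<le> n \<Longrightarrow> Exp n B k (\<lambda>_. c) = c"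
  using card_samples_pos[of B n k] by (simp add: Exp_def)

lemma Exp_mono: "(\<And>Ss. Ss \<in> samples n B k \<Longrightarrow> X Ss \<le> Y Ss) \<Longrightarrow> Exp n B k X \<le> Exp n B k Y"
  unfolding Exp_def by (intro divide_right_mono sum_mono) auto

lemma Exp_add: "Exp n B k (\<lambda>Ss. X Ss + Y Ss) = Exp n B k X + Exp n B k Y"
  unfolding Exp_def by (simp add: sum.distrib add_divide_distrib)

lemma Exp_diff: "Exp n B k (\<lambda>Ss. X Ss - Y Ss) = Exp n B k X - Exp n B k Y"
  unfolding Exp_def by (simp add: sum_subtractf diff_divide_distrib)

lemma Exp_cmult: "Exp n B k (\<lambda>Ss. c * X Ss) = c * Exp n B k X"
  unfolding Exp_def by (simp add: sum_distrib_left[symmetric])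

lemma Exp_sum: "Exp n B k (\<lambda>Ss. \<Sum>j\<in>J. X j Ss) = (\<Sum>j\<in>J. Exp n B k (X j))"
  unfolding Exp_def by (simp add: sum.swap[of _ J] sum_divide_distrib)

lemma Avg_mono: "(\<And>S. S \<in> batches n B \<Longrightarrow> X S \<le> Y S) \<Longrightarrow> Avg n B X \<le> Avg n B Y"
  unfolding Avg_def by (intro divide_right_mono sum_mono) auto

lemma Avg_add: "Avg n B (\<lambda>S. X S + Y S) = Avg n B X + Avg n B Y"
  unfolding Avg_def by (simp add: sum.distrib add_divide_distrib)

lemma Avg_diff: "Avg n B (\<lambda>S. X S - Y S) = Avg n B X - Avg n B Y"
  unfolding Avg_def by (simp add: sum_subtractf diff_divide_distrib)

lemma Avg_cmult: "Avg n B (\<lambda>S. c * X S) = c * Avg n B X"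
  unfolding Avg_def by (simp add: sum_distrib_left[symmetric])

lemma Avg_const: "B \<le> n \<Longrightarrow> Avg n B (\<lambda>_. c) = c"
  using card_batches_pos[of B n] by (simp add: Avg_def)

lemma Exp_take:
  assumes "k \<le> K" "B \<le> n"
  shows "Exp n B K (\<lambda>Ss. X (take k Ss)) = Exp n B k X"
  using assms(1)
proof (induction K)
  case 0 thus ?case by (simp add: Exp_0)
next
  case (Suc K)
  show ?case
  proof (cases "k = Suc K")
    case True
    have "Exp n B (Suc K) (\<lambda>Ss. X (take k Ss)) = Exp n B (Suc K) X"
      unfolding Exp_def True by (intro arg_cong2[where f="(/)"] sum.cong) (auto simp: samples_def)
    thus ?thesis using True by simp
  next
    case False
    hence k: "k \<le> K" using Suc by simp
    have "Exp n B (Suc K) (\<lambda>Ss. X (take k Ss)) = Exp n B K (\<lambda>Ss. Avg n B (\<lambda>S. X (take k (Ss @ [S]))))"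
      by (rule Exp_Suc)
    also have "\<dots> = Exp n B K (\<lambda>Ss. X (take k Ss))"
      unfolding Exp_def
    proof (intro arg_cong2[where f="(/)"] sum.cong refl)
      fix Ss assume "Ss \<in> samples n B K"
      hence "length Ss = K" by (simp add: samples_def)
      thus "Avg n B (\<lambda>S. X (take k (Ss @ [S]))) = X (take k Ss)" using k Avg_const[OF assms(2)] by simp
    qed
    finally show ?thesis using Suc.IH[OF k] by simp
  qed
qed

lemma convex_favg:
  assumes "\<And>i. i < n \<Longrightarrow> convex_on UNIV (fs i)"
  shows "convex_on UNIV (favg n fs)"
  unfolding convex_on_def
proof (intro conjI ballI allI impI convex_UNIV)
  fix x y :: 'a and u v :: real assume uv: "0 \<le> u" "0 \<le> v" "u + v = 1"
  have "(\<Sum>i<n. fs i (u *\<^sub>R x + v *\<^sub>R y)) \<le> (\<Sum>i<n. u * fs i x + v * fs i y)"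
  proof (rule sum_mono)
    fix i assume "i \<in> {..<n}"
    hence "convex_on UNIV (fs i)" using assms by simp
    thus "fs i (u *\<^sub>R x + v *\<^sub>R y) \<le> u * fs i x + v * fs i y"
      unfolding convex_on_def using uv by blast
  qed
  thus "favg n fs (u *\<^sub>R x + v *\<^sub>R y) \<le> u * favg n fs x + v * favg n fs y"
    unfolding favg_def by (simp add: divide_right_mono sum.distrib sum_distrib_left[symmetric] add_divide_distrib[symmetric])
qed

lemma convex_first_order:
  fixes f :: "'a::euclidean_space \<Rightarrow> real"
  assumes "convex_on UNIV f" "(f has_derivative (\<lambda>h. G \<bullet> h)) (at x)"
  shows "f x + G \<bullet> (y - x) \<le> f y"
proof -
  have "G \<bullet> (y - x) \<le> f y - f x - 0"
  proof (rule first_order[OF assms(2)])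
    fix t :: real assume t: "0 < t" "t < 1"
    have "f ((1 - t) *\<^sub>R x + t *\<^sub>R y) \<le> (1 - t) * f x + t * f y"
      using assms(1) t unfolding convex_on_def by auto
    moreover have "(1 - t) *\<^sub>R x + t *\<^sub>R y = x + t *\<^sub>R (y - x)" by (simp add: algebra_simps)
    ultimately show "f (x + t *\<^sub>R (y - x)) \<le> (1 - t) * f x + t * f y - t * (1 - t) * 0" by simp
  qed
  thus ?thesis by simp
qed

lemma strong_first_order:
  fixes f :: "'a::euclidean_space \<Rightarrow> real"
  assumes "strongly_convex \<mu> f" "(f has_derivative (\<lambda>h. G \<bullet> h)) (at x)"
  shows "f x + G \<bullet> (y - x) + \<mu> / 2 * (norm (y - x))^2 \<le> f y"
proof -
  have "G \<bullet> (y - x) \<le> f y - f x - \<mu> / 2 * (norm (x - y))^2"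
  proof (rule first_order[OF assms(2)])
    fix t :: real assume t: "0 < t" "t < 1"
    have "f ((1 - t) *\<^sub>R x + t *\<^sub>R y) \<le> (1 - t) * f x + t * f y - \<mu> / 2 * t * (1 - t) * (norm (x - y))\<^sup>2"
      using assms(1) t unfolding strongly_convex_def by auto
    moreover have "(1 - t) *\<^sub>R x + t *\<^sub>R y = x + t *\<^sub>R (y - x)" by (simp add: algebra_simps)
    ultimately show "f (x + t *\<^sub>R (y - x)) \<le> (1 - t) * f x + t * f y - t * (1 - t) * (\<mu> / 2 * (norm (x - y))^2)"
      by (simp add: algebra_simps)
  qed
  thus ?thesis by (simp add: norm_minus_commute)
qed

lemma norm_step_sq:
  fixes r g :: "'a::real_inner"
  shows "(norm (r - \<gamma> *\<^sub>R g))^2 = (norm r)^2 - 2 * \<gamma> * (g \<bullet> r) + \<gamma>^2 * (norm g)^2"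
  by (simp only: power2_norm_eq_inner) (simp add: inner_diff_left inner_diff_right inner_commute algebra_simps power2_eq_square)
theorem corollary1:
  fixes fs :: "nat \<Rightarrow> 'a::euclidean_space \<Rightarrow> real"
    and gs :: "nat \<Rightarrow> 'a \<Rightarrow> 'a"
    and L :: "nat \<Rightarrow> real"
    and n B :: nat
    and c \<gamma>b \<mu> :: real
    and x0 xstar :: 'a
  assumes n_pos: "n \<ge> 1"
    and B_range: "1 \<le> B" "B \<le> n"
    and c_pos: "c > 0" and gb_pos: "\<gamma>b > 0"
    and L_pos: "\<And>i. i < n \<Longrightarrow> L i > 0"
    and convex: "\<And>i. i < n \<Longrightarrow> convex_on UNIV (fs i)"
    and smooth: "\<And>i. i < n \<Longrightarrow> L_smooth (L i) (fs i) (gs i)"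
    and nonneg: "\<And>i x. i < n \<Longrightarrow> fs i x \<ge> 0"
    and minimizer: "\<And>x. favg n fs xstar \<le> favg n fs x"
  defines "\<alpha> \<equiv> min (1 / (2 * c * Max (L ` {..<n}))) \<gamma>b"
  shows
    "(c = 1 \<longrightarrow>
       (\<forall>K\<ge>1. Exp n B K (\<lambda>Ss.
            favg n fs ((1 / real K) *\<^sub>R (\<Sum>k<K. sps_iter fs gs c \<gamma>b x0 (take k Ss)))
            - favg n fs xstar)
         \<le> (norm (x0 - xstar))\<^sup>2 / (\<alpha> * real K) + 2 * \<gamma>b * favg n fs xstar / \<alpha>))
     \<and>
     ((\<mu> > 0 \<and> strongly_convex \<mu> (favg n fs) \<and> c \<ge> 1/2) \<longrightarrow>
       (\<forall>k. Exp n B k (\<lambda>Ss. (norm (sps_iter fs gs c \<gamma>b x0 Ss - xstar))\<^sup>2)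
         \<le> (1 - \<mu> * \<alpha>) ^ k * (norm (x0 - xstar))\<^sup>2 + 2 * \<gamma>b * favg n fs xstar / (\<mu> * \<alpha>)))"
proof -
  define Lm where "Lm = Max (L ` {..<n})"
  have Lle: "\<And>i. i < n \<Longrightarrow> L i \<le> Lm" unfolding Lm_def by (intro Max_ge) auto
  have Lm_pos: "Lm > 0" using Lle[of 0] L_pos[of 0] n_pos by simp
  have al_def: "\<alpha> = min (1 / (2 * c * Lm)) \<gamma>b" unfolding \<alpha>_def Lm_def ..
  have al_pos: "\<alpha> > 0" using Lm_pos c_pos gb_pos unfolding al_def by simp
  have al_gb: "\<alpha> \<le> \<gamma>b" unfolding al_def by simp
  have al_L: "\<alpha> \<le> 1 / (2 * c * Lm)" unfolding al_def by simp
  define fstar where "fstar = favg n fs xstar"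
  define gbar where "gbar = (\<lambda>z. (1 / real n) *\<^sub>R (\<Sum>i<n. gs i z))"
  have Bsub: "\<And>S. S \<in> batches n B \<Longrightarrow> S \<subseteq> {..<n}" by (simp add: batches_def)
  have Bcard: "\<And>S. S \<in> batches n B \<Longrightarrow> card S = B" by (simp add: batches_def)
  have Bfin: "\<And>S. S \<in> batches n B \<Longrightarrow> finite S" using Bsub finite_subset by blast
  have fd: "\<And>i z. i < n \<Longrightarrow> (fs i has_derivative (\<lambda>h. gs i z \<bullet> h)) (at z)"
    using smooth unfolding L_smooth_def by blast
  have gS_inner: "gS gs S z \<bullet> v = (\<Sum>i\<in>S. gs i z \<bullet> v) / real (card S)" for S z v
    by (simp add: gS_def inner_sum_left)
  have F_nonneg: "fS fs S z \<ge> 0" if "S \<in> batches n B" for S z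
    unfolding fS_def using Bsub[OF that] nonneg by (intro divide_nonneg_nonneg sum_nonneg) auto
  have conv_S: "fS fs S z + gS gs S z \<bullet> (y - z) \<le> fS fs S y" if S: "S \<in> batches n B" for S z y
  proof -
    have "(\<Sum>i\<in>S. fs i z + gs i z \<bullet> (y - z)) \<le> (\<Sum>i\<in>S. fs i y)"
      using Bsub[OF S] by (intro sum_mono convex_first_order[OF convex fd]) auto
    thus ?thesis unfolding fS_def gS_inner
      by (simp add: sum.distrib add_divide_distrib[symmetric] divide_right_mono)
  qed
  have desc_S: "fS fs S y \<le> fS fs S z + gS gs S z \<bullet> (y - z) + Lm / 2 * (norm (y - z))^2"
    if S: "S \<in> batches n B" for S z y
  proof -
    have "(\<Sum>i\<in>S. fs i y) \<le> (\<Sum>i\<in>S. fs i z + gs i z \<bullet> (y - z) + Lm / 2 * (norm (y - z))^2)"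
    proof (rule sum_mono)
      fix i assume i: "i \<in> S"
      hence il: "i < n" using Bsub[OF S] by auto
      have "fs i y \<le> fs i z + gs i z \<bullet> (y - z) + L i / 2 * (norm (y - z))^2"
        by (rule descent[OF smooth[OF il]])
      also have "L i / 2 * (norm (y - z))^2 \<le> Lm / 2 * (norm (y - z))^2"
        using Lle[OF il] by (intro mult_right_mono) auto
      finally show "fs i y \<le> fs i z + gs i z \<bullet> (y - z) + Lm / 2 * (norm (y - z))^2" by simp
    qed
    also have "\<dots> = (\<Sum>i\<in>S. fs i z) + (\<Sum>i\<in>S. gs i z \<bullet> (y - z)) + real (card S) * (Lm / 2 * (norm (y - z))^2)"
      by (simp add: sum.distrib)
    finally have *: "(\<Sum>i\<in>S. fs i y) \<le> (\<Sum>i\<in>S. fs i z) + (\<Sum>i\<in>S. gs i z \<bullet> (y - z)) + real (card S) * (Lm / 2 * (norm (y - z))^2)" .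
    have cpos: "real (card S) > 0" using Bcard[OF S] B_range by simp
    show ?thesis unfolding fS_def gS_inner using * cpos
      by (simp add: field_simps)
  qed
  have grad_S: "(norm (gS gs S z))^2 \<le> 2 * Lm * fS fs S z" if S: "S \<in> batches n B" for S z
  proof -
    define g where "g = gS gs S z"
    have "0 \<le> fS fs S (z - (1 / Lm) *\<^sub>R g)" by (rule F_nonneg[OF S])
    also have "\<dots> \<le> fS fs S z + g \<bullet> (- ((1 / Lm) *\<^sub>R g)) + Lm / 2 * (norm (- ((1 / Lm) *\<^sub>R g)))^2"
      using desc_S[OF S, of "z - (1 / Lm) *\<^sub>R g" z] unfolding g_def by simp
    also have "\<dots> = fS fs S z - (norm g)^2 / (2 * Lm)"
      using Lm_pos by (simp add: power2_norm_eq_inner[symmetric] power2_eq_square field_simps)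
    finally show ?thesis unfolding g_def[symmetric] using Lm_pos by (simp add: field_simps)
  qed
  have avg_F: "Avg n B (\<lambda>S. fS fs S z) = favg n fs z" for z
    unfolding fS_def favg_def by (rule avg_sum[OF B_range])
  have avg_G: "Avg n B (\<lambda>S. gS gs S z \<bullet> v) = gbar z \<bullet> v" for z v
    unfolding gS_inner gbar_def using avg_sum[OF B_range, of "\<lambda>i. gs i z \<bullet> v"]
    by (simp add: inner_sum_left)
  have step_eq: "sps_step fs gs c \<gamma>b z S = (if gS gs S z = 0 then z else
      z - min (fS fs S z / (c * (norm (gS gs S z))\<^sup>2)) \<gamma>b *\<^sub>R gS gs S z)" for z S
    by (simp add: sps_step_def Let_def)
  have gam: "\<alpha> \<le> min (fS fs S z / (c * (norm (gS gs S z))\<^sup>2)) \<gamma>b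
      \<and> min (fS fs S z / (c * (norm (gS gs S z))\<^sup>2)) \<gamma>b \<le> \<gamma>b
      \<and> min (fS fs S z / (c * (norm (gS gs S z))\<^sup>2)) \<gamma>b * (norm (gS gs S z))\<^sup>2 \<le> fS fs S z / c"
    if S: "S \<in> batches n B" and g0: "gS gs S z \<noteq> 0" for S z
  proof -
    define g where "g = gS gs S z"
    define F where "F = fS fs S z"
    have gpos: "(norm g)^2 > 0" using g0 unfolding g_def by simp
    have gF: "(norm g)^2 \<le> 2 * Lm * F" using grad_S[OF S] unfolding g_def F_def .
    have Fpos: "F > 0"
    proof (rule ccontr)
      assume "\<not> F > 0" hence "2 * Lm * F \<le> 0" using Lm_pos by (intro mult_nonneg_nonpos) auto
      thus False using gpos gF by linarith
    qed
    have "1 / (2 * c * Lm) \<le> F / (c * (norm g)^2)"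
      using gF c_pos Lm_pos gpos Fpos by (simp add: divide_simps) (smt (verit) mult_left_mono mult.commute mult.left_commute)
    hence a1: "\<alpha> \<le> min (F / (c * (norm g)\<^sup>2)) \<gamma>b" using al_L al_gb by simp
    have "min (F / (c * (norm g)\<^sup>2)) \<gamma>b * (norm g)\<^sup>2 \<le> F / (c * (norm g)\<^sup>2) * (norm g)\<^sup>2"
      using gpos by (intro mult_right_mono) auto
    also have "\<dots> = F / c" using gpos c_pos by simp
    finally show ?thesis using a1 unfolding g_def F_def by simp
  qed
  show ?thesis
  proof (intro conjI impI allI)
    assume c1: "c = 1"
    have step1: "(norm (sps_step fs gs c \<gamma>b z S - xstar))^2 \<le> (norm (z - xstar))^2 - \<alpha> * fS fs S z + 2 * \<gamma>b * fS fs S xstar"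
      if S: "S \<in> batches n B" for S z
    proof -
      define g where "g = gS gs S z"
      define F where "F = fS fs S z"
      define Fs where "Fs = fS fs S xstar"
      define r where "r = z - xstar"
      have F0: "F \<ge> 0" and Fs0: "Fs \<ge> 0" using F_nonneg[OF S] unfolding F_def Fs_def by auto
      have cv: "F + g \<bullet> (xstar - z) \<le> Fs" using conv_S[OF S] unfolding F_def Fs_def g_def .
      have gr: "g \<bullet> r \<ge> F - Fs" using cv unfolding r_def by (simp add: inner_diff_right)
      show ?thesis
      proof (cases "g = 0")
        case True
        have "\<alpha> * F \<le> \<gamma>b * Fs" using cv True F0 al_pos al_gb by (intro mult_mono) auto
        moreover have "0 \<le> \<gamma>b * Fs" using gb_pos Fs0 by simp
        ultimately show ?thesis using True step_eq[of z S] unfolding g_def F_def Fs_def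
          by (simp; linarith)
      next
        case False
        define \<gamma> where "\<gamma> = min (F / (c * (norm g)\<^sup>2)) \<gamma>b"
        have G: "\<alpha> \<le> \<gamma>" "\<gamma> \<le> \<gamma>b" "\<gamma> * (norm g)\<^sup>2 \<le> F / c"
          using gam[OF S, of z] False unfolding \<gamma>_def g_def F_def by auto
        have gp: "\<gamma> \<ge> 0" using G al_pos by simp
        have e: "sps_step fs gs c \<gamma>b z S - xstar = r - \<gamma> *\<^sub>R g"
          using False step_eq[of z S] unfolding \<gamma>_def g_def F_def r_def by simp
        have h1: "\<gamma>^2 * (norm g)^2 \<le> \<gamma> * F" using mult_left_mono[OF G(3) gp] c1
          by (simp add: power2_eq_square mult.assoc)
        have h2: "\<gamma> * (g \<bullet> r) \<ge> \<gamma> * F - \<gamma> * Fs" using mult_left_mono[OF gr gp] by (simp add: algebra_simps)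
        have h3: "\<alpha> * F \<le> \<gamma> * F" using G F0 by (intro mult_right_mono) auto
        have h4: "\<gamma> * Fs \<le> \<gamma>b * Fs" using G Fs0 by (intro mult_right_mono) auto
        show ?thesis unfolding e norm_step_sq r_def[symmetric] g_def[symmetric] F_def[symmetric] Fs_def[symmetric]
          using h1 h2 h3 h4 by linarith
      qed
    qed
    define e where "e = (\<lambda>k. Exp n B k (\<lambda>Ss. (norm (sps_iter fs gs c \<gamma>b x0 Ss - xstar))^2))"
    define Fk where "Fk = (\<lambda>k. Exp n B k (\<lambda>Ss. favg n fs (sps_iter fs gs c \<gamma>b x0 Ss)))"
    have rec: "e (Suc k) \<le> e k - \<alpha> * Fk k + 2 * \<gamma>b * fstar" for k
    proof -
      have "e (Suc k) = Exp n B k (\<lambda>Ss. Avg n B (\<lambda>S. (norm (sps_step fs gs c \<gamma>b (sps_iter fs gs c \<gamma>b x0 Ss) S - xstar))^2))"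
        unfolding e_def Exp_Suc by (simp add: sps_iter_def)
      also have "\<dots> \<le> Exp n B k (\<lambda>Ss. (norm (sps_iter fs gs c \<gamma>b x0 Ss - xstar))^2 - \<alpha> * favg n fs (sps_iter fs gs c \<gamma>b x0 Ss) + 2 * \<gamma>b * fstar)"
      proof (rule Exp_mono)
        fix Ss
        let ?z = "sps_iter fs gs c \<gamma>b x0 Ss"
        have "Avg n B (\<lambda>S. (norm (sps_step fs gs c \<gamma>b ?z S - xstar))^2) \<le> Avg n B (\<lambda>S. (norm (?z - xstar))^2 - \<alpha> * fS fs S ?z + 2 * \<gamma>b * fS fs S xstar)"
          by (rule Avg_mono) (rule step1)
        also have "\<dots> = (norm (?z - xstar))^2 - \<alpha> * favg n fs ?z + 2 * \<gamma>b * fstar"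
          by (simp add: Avg_add Avg_diff Avg_cmult Avg_const[OF B_range(2)] avg_F fstar_def)
        finally show "Avg n B (\<lambda>S. (norm (sps_step fs gs c \<gamma>b ?z S - xstar))^2) \<le> (norm (?z - xstar))^2 - \<alpha> * favg n fs ?z + 2 * \<gamma>b * fstar" .
      qed
      also have "\<dots> = e k - \<alpha> * Fk k + 2 * \<gamma>b * fstar"
        unfolding e_def Fk_def by (simp add: Exp_add Exp_diff Exp_cmult Exp_const[OF B_range(2)])
      finally show ?thesis .
    qed
    have e0: "e k \<ge> 0" for k unfolding e_def Exp_def by (intro divide_nonneg_nonneg sum_nonneg) auto
    have tele: "e K + \<alpha> * (\<Sum>k<K. Fk k) \<le> e 0 + 2 * \<gamma>b * fstar * real K" for K
    proof (induction K)
      case 0 thus ?case by simp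
    next
      case (Suc K) thus ?case using rec[of K] by (simp add: algebra_simps)
    qed
    have e00: "e 0 = (norm (x0 - xstar))^2" unfolding e_def Exp_0 by (simp add: sps_iter_def)
    have fs0: "fstar \<ge> 0" unfolding fstar_def favg_def using nonneg by (intro divide_nonneg_nonneg sum_nonneg) auto
    fix K :: nat assume K: "K \<ge> 1"
    have Kpos: "real K > 0" using K by simp
    have "Exp n B K (\<lambda>Ss. favg n fs ((1 / real K) *\<^sub>R (\<Sum>k<K. sps_iter fs gs c \<gamma>b x0 (take k Ss))) - favg n fs xstar)
      \<le> Exp n B K (\<lambda>Ss. (\<Sum>k<K. (1 / real K) * favg n fs (sps_iter fs gs c \<gamma>b x0 (take k Ss))) - fstar)"
    proof (rule Exp_mono)
      fix Ss
      have "favg n fs (\<Sum>k<K. (1 / real K) *\<^sub>R sps_iter fs gs c \<gamma>b x0 (take k Ss))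
          \<le> (\<Sum>k<K. (1 / real K) * favg n fs (sps_iter fs gs c \<gamma>b x0 (take k Ss)))"
        using K by (intro convex_on_sum[OF _ _ convex_favg[OF convex]]) (auto simp: lessThan_empty_iff)
      thus "favg n fs ((1 / real K) *\<^sub>R (\<Sum>k<K. sps_iter fs gs c \<gamma>b x0 (take k Ss))) - favg n fs xstar
          \<le> (\<Sum>k<K. (1 / real K) * favg n fs (sps_iter fs gs c \<gamma>b x0 (take k Ss))) - fstar"
        by (simp add: scaleR_sum_right fstar_def)
    qed
    also have "\<dots> = (\<Sum>k<K. (1 / real K) * Fk k) - fstar"
    proof -
      have tk: "Exp n B K (\<lambda>Ss. favg n fs (sps_iter fs gs c \<gamma>b x0 (take k Ss))) = Fk k" if "k \<in> {..<K}" for k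
        unfolding Fk_def using Exp_take[where X="\<lambda>Ss. favg n fs (sps_iter fs gs c \<gamma>b x0 Ss)", OF _ B_range(2), of k K] that by simp
      have "Exp n B K (\<lambda>Ss. (\<Sum>k<K. (1 / real K) * favg n fs (sps_iter fs gs c \<gamma>b x0 (take k Ss))) - fstar)
          = Exp n B K (\<lambda>Ss. (\<Sum>k<K. (1 / real K) * favg n fs (sps_iter fs gs c \<gamma>b x0 (take k Ss)))) - Exp n B K (\<lambda>_. fstar)"
        by (rule Exp_diff)
      also have "Exp n B K (\<lambda>Ss. (\<Sum>k<K. (1 / real K) * favg n fs (sps_iter fs gs c \<gamma>b x0 (take k Ss))))
          = (\<Sum>k<K. Exp n B K (\<lambda>Ss. (1 / real K) * favg n fs (sps_iter fs gs c \<gamma>b x0 (take k Ss))))"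
        by (rule Exp_sum)
      also have "\<dots> = (\<Sum>k<K. (1 / real K) * Fk k)"
      proof (intro sum.cong refl)
        fix k assume "k \<in> {..<K}"
        thus "Exp n B K (\<lambda>Ss. (1 / real K) * favg n fs (sps_iter fs gs c \<gamma>b x0 (take k Ss))) = (1 / real K) * Fk k"
          by (simp only: Exp_cmult tk)
      qed
      finally show ?thesis using Exp_const[OF B_range(2)] by simp
    qed
    also have "\<dots> = (\<Sum>k<K. Fk k) / real K - fstar" by (simp only: sum_distrib_left[symmetric]) simp
    also have "\<dots> \<le> (norm (x0 - xstar))\<^sup>2 / (\<alpha> * real K) + 2 * \<gamma>b * fstar / \<alpha>"
    proof -
      have "\<alpha> * (\<Sum>k<K. Fk k) \<le> (norm (x0 - xstar))\<^sup>2 + 2 * \<gamma>b * fstar * real K"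
        using tele[of K] e0[of K] e00 by simp
      hence "(\<Sum>k<K. Fk k) / real K \<le> ((norm (x0 - xstar))\<^sup>2 + 2 * \<gamma>b * fstar * real K) / (\<alpha> * real K)"
        using al_pos Kpos by (simp add: divide_simps mult.commute mult.left_commute)
      also have "\<dots> = (norm (x0 - xstar))\<^sup>2 / (\<alpha> * real K) + 2 * \<gamma>b * fstar / \<alpha>"
        using al_pos Kpos by (simp add: add_divide_distrib)
      finally show ?thesis using fs0 by simp
    qed
    finally show "Exp n B K (\<lambda>Ss. favg n fs ((1 / real K) *\<^sub>R (\<Sum>k<K. sps_iter fs gs c \<gamma>b x0 (take k Ss))) - favg n fs xstar)
      \<le> (norm (x0 - xstar))\<^sup>2 / (\<alpha> * real K) + 2 * \<gamma>b * favg n fs xstar / \<alpha>"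
      unfolding fstar_def .
  next
    fix k :: nat
    assume H: "\<mu> > 0 \<and> strongly_convex \<mu> (favg n fs) \<and> c \<ge> 1/2"
    hence mu: "\<mu> > 0" and sc: "strongly_convex \<mu> (favg n fs)" and chalf: "c \<ge> 1/2" by auto
    have fder: "(favg n fs has_derivative (\<lambda>h. gbar z \<bullet> h)) (at z)" for z
    proof -
      have "((\<lambda>x. (1 / real n) * (\<Sum>i<n. fs i x)) has_derivative (\<lambda>h. (1 / real n) * (\<Sum>i<n. gs i z \<bullet> h))) (at z)"
        by (intro has_derivative_mult_right has_derivative_sum fd) auto
      moreover have "(\<lambda>x. (1 / real n) * (\<Sum>i<n. fs i x)) = favg n fs" by (auto simp: favg_def fun_eq_iff)
      moreover have "(\<lambda>h. (1 / real n) * (\<Sum>i<n. gs i z \<bullet> h)) = (\<lambda>h. gbar z \<bullet> h)"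
        by (auto simp: gbar_def fun_eq_iff inner_sum_left)
      ultimately show ?thesis by simp
    qed
    have favg_desc: "favg n fs y \<le> favg n fs z + gbar z \<bullet> (y - z) + Lm / 2 * (norm (y - z))^2" for y z
    proof -
      have "Avg n B (\<lambda>S. fS fs S y) \<le> Avg n B (\<lambda>S. fS fs S z + gS gs S z \<bullet> (y - z) + Lm / 2 * (norm (y - z))^2)"
        by (rule Avg_mono) (rule desc_S)
      thus ?thesis by (simp add: Avg_add avg_F avg_G Avg_const[OF B_range(2)])
    qed
    have mu_L: "\<mu> \<le> Lm"
    proof -
      obtain b :: 'a where b: "b \<in> Basis" using nonempty_Basis by blast
      have "favg n fs 0 + gbar 0 \<bullet> (b - 0) + \<mu> / 2 * (norm (b - 0))^2 \<le> favg n fs b"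
        by (rule strong_first_order[OF sc fder])
      moreover have "favg n fs b \<le> favg n fs 0 + gbar 0 \<bullet> (b - 0) + Lm / 2 * (norm (b - 0))^2"
        by (rule favg_desc)
      ultimately have "\<mu> / 2 * (norm (b - 0))^2 \<le> Lm / 2 * (norm (b - 0))^2" by linarith
      moreover have "(norm (b - 0))^2 = 1" using b by simp
      ultimately show ?thesis by simp
    qed
    have q0: "0 \<le> 1 - \<mu> * \<alpha>"
    proof -
      have "Lm \<le> 2 * c * Lm" using chalf Lm_pos by (simp add: mult_le_cancel_right1)
      hence "1 / (2 * c * Lm) \<le> 1 / Lm" using Lm_pos c_pos by (intro divide_left_mono) auto
      hence "\<alpha> \<le> 1 / Lm" using al_L by linarith
      hence "\<mu> * \<alpha> \<le> \<mu> * (1 / Lm)" using mu by (intro mult_left_mono) auto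
      also have "\<dots> \<le> 1" using mu_L Lm_pos by simp
      finally show ?thesis by simp
    qed
    have step2: "(norm (sps_step fs gs c \<gamma>b z S - xstar))^2 \<le> (norm (z - xstar))^2
        - 2 * \<alpha> * (fS fs S xstar - fS fs S z + gS gs S z \<bullet> (z - xstar)) + 2 * \<gamma>b * fS fs S xstar"
      if S: "S \<in> batches n B" for S z
    proof -
      define g where "g = gS gs S z"
      define F where "F = fS fs S z"
      define Fs where "Fs = fS fs S xstar"
      define r where "r = z - xstar"
      have F0: "F \<ge> 0" and Fs0: "Fs \<ge> 0" using F_nonneg[OF S] unfolding F_def Fs_def by auto
      have cv: "F + g \<bullet> (xstar - z) \<le> Fs" using conv_S[OF S] unfolding F_def Fs_def g_def .
      have D0: "Fs - F + g \<bullet> r \<ge> 0" using cv unfolding r_def by (simp add: inner_diff_right)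
      show ?thesis
      proof (cases "g = 0")
        case True
        have "\<alpha> * (Fs - F) \<le> \<gamma>b * Fs" using D0 True F0 Fs0 al_pos al_gb by (intro mult_mono) auto
        thus ?thesis using True step_eq[of z S] unfolding g_def[symmetric] F_def[symmetric] Fs_def[symmetric]
          by simp
      next
        case False
        define \<gamma> where "\<gamma> = min (F / (c * (norm g)\<^sup>2)) \<gamma>b"
        have G: "\<alpha> \<le> \<gamma>" "\<gamma> \<le> \<gamma>b" "\<gamma> * (norm g)\<^sup>2 \<le> F / c"
          using gam[OF S, of z] False unfolding \<gamma>_def g_def F_def by auto
        have gp: "\<gamma> \<ge> 0" using G al_pos by simp
        have e: "sps_step fs gs c \<gamma>b z S - xstar = r - \<gamma> *\<^sub>R g"
          using False step_eq[of z S] unfolding \<gamma>_def g_def F_def r_def by simp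
        have "F * 1 \<le> F * (2 * c)" using chalf F0 by (intro mult_left_mono) auto
        hence "F / c \<le> 2 * F" using c_pos by (simp add: divide_simps algebra_simps)
        hence h1: "\<gamma>^2 * (norm g)^2 \<le> 2 * (\<gamma> * F)" using mult_left_mono[OF G(3) gp] mult_left_mono[of "F/c" "2*F" \<gamma>] gp
          by (simp add: power2_eq_square mult.assoc mult.left_commute)
        have h3: "\<alpha> * (Fs - F + g \<bullet> r) \<le> \<gamma> * (Fs - F + g \<bullet> r)" using G D0 by (intro mult_right_mono) auto
        have h4: "\<gamma> * Fs \<le> \<gamma>b * Fs" using G Fs0 by (intro mult_right_mono) auto
        show ?thesis unfolding e norm_step_sq r_def[symmetric] g_def[symmetric] F_def[symmetric] Fs_def[symmetric]
          using h1 h3 h4 by (simp add: algebra_simps)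
      qed
    qed
    define e where "e = (\<lambda>k. Exp n B k (\<lambda>Ss. (norm (sps_iter fs gs c \<gamma>b x0 Ss - xstar))^2))"
    have rec: "e (Suc k) \<le> (1 - \<mu> * \<alpha>) * e k + 2 * \<gamma>b * fstar" for k
    proof -
      have "e (Suc k) = Exp n B k (\<lambda>Ss. Avg n B (\<lambda>S. (norm (sps_step fs gs c \<gamma>b (sps_iter fs gs c \<gamma>b x0 Ss) S - xstar))^2))"
        unfolding e_def Exp_Suc by (simp add: sps_iter_def)
      also have "\<dots> \<le> Exp n B k (\<lambda>Ss. (1 - \<mu> * \<alpha>) * (norm (sps_iter fs gs c \<gamma>b x0 Ss - xstar))^2 + 2 * \<gamma>b * fstar)"
      proof (rule Exp_mono)
        fix Ss
        let ?z = "sps_iter fs gs c \<gamma>b x0 Ss"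
        have "Avg n B (\<lambda>S. (norm (sps_step fs gs c \<gamma>b ?z S - xstar))^2) \<le> Avg n B (\<lambda>S. (norm (?z - xstar))^2
            - 2 * \<alpha> * (fS fs S xstar - fS fs S ?z + gS gs S ?z \<bullet> (?z - xstar)) + 2 * \<gamma>b * fS fs S xstar)"
          by (rule Avg_mono) (rule step2)
        also have "\<dots> = (norm (?z - xstar))^2 - 2 * \<alpha> * (fstar - favg n fs ?z + gbar ?z \<bullet> (?z - xstar)) + 2 * \<gamma>b * fstar"
          by (simp add: Avg_add Avg_diff Avg_cmult Avg_const[OF B_range(2)] avg_F avg_G fstar_def)
        also have "\<dots> \<le> (1 - \<mu> * \<alpha>) * (norm (?z - xstar))^2 + 2 * \<gamma>b * fstar"
        proof -
          have "favg n fs ?z + gbar ?z \<bullet> (xstar - ?z) + \<mu> / 2 * (norm (xstar - ?z))^2 \<le> fstar"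
            unfolding fstar_def by (rule strong_first_order[OF sc fder])
          hence "\<mu> / 2 * (norm (?z - xstar))^2 \<le> fstar - favg n fs ?z + gbar ?z \<bullet> (?z - xstar)"
            by (simp add: norm_minus_commute inner_diff_right)
          hence "\<alpha> * (\<mu> / 2 * (norm (?z - xstar))^2) \<le> \<alpha> * (fstar - favg n fs ?z + gbar ?z \<bullet> (?z - xstar))"
            using al_pos by (intro mult_left_mono) auto
          thus ?thesis by (simp add: algebra_simps)
        qed
        finally show "Avg n B (\<lambda>S. (norm (sps_step fs gs c \<gamma>b ?z S - xstar))^2) \<le> (1 - \<mu> * \<alpha>) * (norm (?z - xstar))^2 + 2 * \<gamma>b * fstar" .
      qed
      also have "\<dots> = (1 - \<mu> * \<alpha>) * e k + 2 * \<gamma>b * fstar"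
        unfolding e_def by (simp add: Exp_add Exp_cmult Exp_const[OF B_range(2)])
      finally show ?thesis .
    qed
    have fs0: "fstar \<ge> 0" unfolding fstar_def favg_def using nonneg by (intro divide_nonneg_nonneg sum_nonneg) auto
    have ma: "\<mu> * \<alpha> > 0" using mu al_pos by simp
    have "e k \<le> (1 - \<mu> * \<alpha>) ^ k * (norm (x0 - xstar))\<^sup>2 + 2 * \<gamma>b * fstar / (\<mu> * \<alpha>)"
    proof (induction k)
      case 0
      have "0 \<le> 2 * \<gamma>b * fstar / (\<mu> * \<alpha>)" using fs0 gb_pos ma by simp
      thus ?case unfolding e_def Exp_0 by (simp add: sps_iter_def)
    next
      case (Suc k)
      have "e (Suc k) \<le> (1 - \<mu> * \<alpha>) * e k + 2 * \<gamma>b * fstar" by (rule rec)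
      also have "\<dots> \<le> (1 - \<mu> * \<alpha>) * ((1 - \<mu> * \<alpha>) ^ k * (norm (x0 - xstar))\<^sup>2 + 2 * \<gamma>b * fstar / (\<mu> * \<alpha>)) + 2 * \<gamma>b * fstar"
        using Suc.IH q0 by (intro add_right_mono mult_left_mono) auto
      also have "\<dots> = (1 - \<mu> * \<alpha>) ^ Suc k * (norm (x0 - xstar))\<^sup>2 + ((1 - \<mu> * \<alpha>) * (2 * \<gamma>b * fstar / (\<mu> * \<alpha>)) + 2 * \<gamma>b * fstar)"
        by (simp add: algebra_simps)
      also have "(1 - \<mu> * \<alpha>) * (2 * \<gamma>b * fstar / (\<mu> * \<alpha>)) + 2 * \<gamma>b * fstar = 2 * \<gamma>b * fstar / (\<mu> * \<alpha>)"
      proof -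
        have "\<And>m X :: real. m > 0 \<Longrightarrow> (1 - m) * (X / m) + X = X / m"
          by (simp add: field_simps)
        thus ?thesis using ma by blast
      qed
      finally show ?case .
    qed
    thus "Exp n B k (\<lambda>Ss. (norm (sps_iter fs gs c \<gamma>b x0 Ss - xstar))\<^sup>2)
         \<le> (1 - \<mu> * \<alpha>) ^ k * (norm (x0 - xstar))\<^sup>2 + 2 * \<gamma>b * favg n fs xstar / (\<mu> * \<alpha>)"
      unfolding e_def fstar_def .
  qed
qed
end
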